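(* Let $G$ be a digraph. Then $\operatorname{CSP}(G^\bot)$ and $\operatorname{CSP}(G^\top)$ are each equivalent to $\operatorname{CSP}(G)$ under first order reductions.
   Context: Digraphs are finite and loopless. For $G=(V,E)$, $G^\top$ is the digraph on $V\cup\{\top\}$ ($\top\notin V$) with edges $E\cup\{(v,\top):v\in V\}$, and $G^\bot$ is the digraph on $V\cup\{\bot\}$ with edges $E\cup\{(\bot,v):v\in V\}$. $\operatorname{CSP}(H)$ is the problem of deciding whether a finite input digraph admits a homomorphism to $H$. First order reductions are in the sense of descriptive complexity (Immerman): input structures carry a linear order, and the output structure is defined by first order formulas (possibly with distinct parameters) on tuples of elements of the input. *)

theory Defs
  imports Main
begin

type_synonym 'a digraph = "'a set \<times> ('a \<times> 'a) set"

definition is_digraph :: "'a digraph \<Rightarrow> bool" where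
  "is_digraph G \<longleftrightarrow> finite (fst G) \<and> snd G \<subseteq> fst G \<times> fst G
     \<and> (\<forall>v. (v, v) \<notin> snd G)"

definition dg_hom :: "'a digraph \<Rightarrow> 'b digraph \<Rightarrow> ('a \<Rightarrow> 'b) \<Rightarrow> bool" where
  "dg_hom A B h \<longleftrightarrow> (\<forall>x\<in>fst A. h x \<in> fst B)
     \<and> (\<forall>x y. (x, y) \<in> snd A \<longrightarrow> (h x, h y) \<in> snd B)"

definition in_CSP :: "'a digraph \<Rightarrow> 'b digraph \<Rightarrow> bool" where
  "in_CSP A H \<longleftrightarrow> (\<exists>h. dg_hom A H h)"

definition top_ext :: "'a digraph \<Rightarrow> 'a option digraph" where
  "top_ext G = (insert None (Some ` fst G),
     (\<lambda>(u, v). (Some u, Some v)) ` snd G \<union> {(Some v, None) | v. v \<in> fst G})"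

definition bot_ext :: "'a digraph \<Rightarrow> 'a option digraph" where
  "bot_ext G = (insert None (Some ` fst G),
     (\<lambda>(u, v). (Some u, Some v)) ` snd G \<union> {(None, Some v) | v. v \<in> fst G})"

text \<open>Input structures: universe {0..<n} (n > 0) with the natural linear order,
  and a loopless edge relation E.  Variables are natural numbers.\<close>
datatype fo =
    FEq nat nat | FLess nat nat | FEdge nat nat
  | FNot fo | FAnd fo fo | FOr fo fo | FEx nat fo | FAll nat fo

fun fo_sat :: "nat \<Rightarrow> (nat \<times> nat) set \<Rightarrow> (nat \<Rightarrow> nat) \<Rightarrow> fo \<Rightarrow> bool" where
  "fo_sat n E \<sigma> (FEq i j) = (\<sigma> i = \<sigma> j)"
| "fo_sat n E \<sigma> (FLess i j) = (\<sigma> i < \<sigma> j)"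
| "fo_sat n E \<sigma> (FEdge i j) = ((\<sigma> i, \<sigma> j) \<in> E)"
| "fo_sat n E \<sigma> (FNot \<phi>) = (\<not> fo_sat n E \<sigma> \<phi>)"
| "fo_sat n E \<sigma> (FAnd \<phi> \<psi>) = (fo_sat n E \<sigma> \<phi> \<and> fo_sat n E \<sigma> \<psi>)"
| "fo_sat n E \<sigma> (FOr \<phi> \<psi>) = (fo_sat n E \<sigma> \<phi> \<or> fo_sat n E \<sigma> \<psi>)"
| "fo_sat n E \<sigma> (FEx x \<phi>) = (\<exists>a<n. fo_sat n E (\<sigma>(x := a)) \<phi>)"
| "fo_sat n E \<sigma> (FAll x \<phi>) = (\<forall>a<n. fo_sat n E (\<sigma>(x := a)) \<phi>)"

definition ordered_input :: "nat \<Rightarrow> (nat \<times> nat) set \<Rightarrow> bool" where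
  "ordered_input n E \<longleftrightarrow> 0 < n \<and> E \<subseteq> {..<n} \<times> {..<n} \<and> (\<forall>v. (v, v) \<notin> E)"

text \<open>A first order query of dimension k with m parameters: a universe formula
  phi0 with free variables 0..k-1 (the tuple) and the parameters, and an edge
  formula phi1 with free variables 0..k-1 (first tuple), k..2k-1 (second tuple)
  and the parameters.  Parameter j is variable 2k + j.\<close>
record fo_query =
  q_dim :: nat
  q_params :: nat
  q_univ :: fo
  q_edge :: fo

definition fo_env :: "nat \<Rightarrow> nat list \<Rightarrow> nat list \<Rightarrow> nat list \<Rightarrow> nat \<Rightarrow> nat" where
  "fo_env k xs ys ps v =
     (if v < k then xs ! v
      else if v < 2 * k then ys ! (v - k)
      else if v < 2 * k + length ps then ps ! (v - 2 * k) else 0)"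

definition query_output ::
  "fo_query \<Rightarrow> nat \<Rightarrow> (nat \<times> nat) set \<Rightarrow> nat list \<Rightarrow> nat list digraph" where
  "query_output Q n E ps =
     (let k = q_dim Q;
          U = {xs. length xs = k \<and> set xs \<subseteq> {..<n}
                   \<and> fo_sat n E (fo_env k xs [] ps) (q_univ Q)}
      in (U, {(xs, ys). xs \<in> U \<and> ys \<in> U
                   \<and> fo_sat n E (fo_env k xs ys ps) (q_edge Q)}))"

definition fo_reduction :: "fo_query \<Rightarrow> 'a digraph \<Rightarrow> 'b digraph \<Rightarrow> bool" where
  "fo_reduction Q H1 H2 \<longleftrightarrow>
     (\<forall>n E ps. ordered_input n E \<and> length ps = q_params Q \<and> distinct ps
        \<and> set ps \<subseteq> {..<n} \<longrightarrow>
        (in_CSP ({..<n}, E) H1 \<longleftrightarrow> in_CSP (query_output Q n E ps) H2))"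

definition fo_reducible :: "'a digraph \<Rightarrow> 'b digraph \<Rightarrow> bool" where
  "fo_reducible H1 H2 \<longleftrightarrow> (\<exists>Q. fo_reduction Q H1 H2)"

definition fo_equivalent :: "'a digraph \<Rightarrow> 'b digraph \<Rightarrow> bool" where
  "fo_equivalent H1 H2 \<longleftrightarrow> fo_reducible H1 H2 \<and> fo_reducible H2 H1"

end

theory Submission
  imports Defs
begin

lemma top_fst[simp]: "None \<in> fst (top_ext G)" "(Some v \<in> fst (top_ext G)) = (v \<in> fst G)"
  by (auto simp: top_ext_def)
lemma bot_fst[simp]: "None \<in> fst (bot_ext G)" "(Some v \<in> fst (bot_ext G)) = (v \<in> fst G)"
  by (auto simp: bot_ext_def)
lemma top_snd[simp]:
  "((Some a, Some b) \<in> snd (top_ext G)) = ((a,b) \<in> snd G)"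
  "((Some a, None) \<in> snd (top_ext G)) = (a \<in> fst G)"
  "((None, x) \<in> snd (top_ext G)) = False"
  by (auto simp: top_ext_def)
lemma bot_snd[simp]:
  "((Some a, Some b) \<in> snd (bot_ext G)) = ((a,b) \<in> snd G)"
  "((None, Some a) \<in> snd (bot_ext G)) = (a \<in> fst G)"
  "((x, None) \<in> snd (bot_ext G)) = False"
  by (auto simp: bot_ext_def)

lemma top_snd_src: "(p, q) \<in> snd (top_ext G) \<Longrightarrow> is_digraph G \<Longrightarrow> \<exists>v. p = Some v \<and> v \<in> fst G"
  by (cases p; cases q) (auto simp: is_digraph_def)
lemma bot_snd_tgt: "(p, q) \<in> snd (bot_ext G) \<Longrightarrow> is_digraph G \<Longrightarrow> \<exists>v. q = Some v \<and> v \<in> fst G"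
  by (cases p; cases q) (auto simp: is_digraph_def)

lemma len2: "length xs = 2 \<Longrightarrow> \<exists>a b. xs = [a,b]"
  by (metis One_nat_def Suc_1 length_0_conv length_Suc_conv)

lemma len1: "length xs = 1 \<Longrightarrow> \<exists>a. xs = [a]"
  by (metis One_nat_def length_0_conv length_Suc_conv)

definition Qtr :: fo_query where
  "Qtr = \<lparr>q_dim = 1, q_params = 0, q_univ = FEx 2 (FEdge 0 2), q_edge = FEdge 0 1\<rparr>"
definition Qbr :: fo_query where
  "Qbr = \<lparr>q_dim = 1, q_params = 0, q_univ = FEx 2 (FEdge 2 0), q_edge = FEdge 0 1\<rparr>"

lemma Qtr_fst: "xs \<in> fst (query_output Qtr n E []) \<longleftrightarrow> (\<exists>x. xs = [x] \<and> x < n \<and> (\<exists>a<n. (x,a) \<in> E))"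
  apply (auto simp: query_output_def Qtr_def fo_env_def Let_def length_Suc_conv)
  done
lemma Qtr_snd: "(xs, ys) \<in> snd (query_output Qtr n E []) \<longleftrightarrow>
   xs \<in> fst (query_output Qtr n E []) \<and> ys \<in> fst (query_output Qtr n E []) \<and> (hd xs, hd ys) \<in> E"
  apply (auto simp: query_output_def Qtr_def fo_env_def Let_def length_Suc_conv)
  done
lemma Qbr_fst: "xs \<in> fst (query_output Qbr n E []) \<longleftrightarrow> (\<exists>x. xs = [x] \<and> x < n \<and> (\<exists>a<n. (a,x) \<in> E))"
  apply (auto simp: query_output_def Qbr_def fo_env_def Let_def length_Suc_conv)
  done
lemma Qbr_snd: "(xs, ys) \<in> snd (query_output Qbr n E []) \<longleftrightarrow>
   xs \<in> fst (query_output Qbr n E []) \<and> ys \<in> fst (query_output Qbr n E []) \<and> (hd xs, hd ys) \<in> E"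
  apply (auto simp: query_output_def Qbr_def fo_env_def Let_def length_Suc_conv)
  done


lemma red_top_rev: assumes G: "is_digraph G" shows "fo_reduction Qtr (top_ext G) G"
  unfolding fo_reduction_def
proof (intro allI impI)
  fix n E and ps :: "nat list"
  assume A: "ordered_input n E \<and> length ps = q_params Qtr \<and> distinct ps \<and> set ps \<subseteq> {..<n}"
  hence ps: "ps = []" and E: "E \<subseteq> {..<n} \<times> {..<n}" by (auto simp: Qtr_def ordered_input_def)
  show "in_CSP ({..<n}, E) (top_ext G) = in_CSP (query_output Qtr n E ps) G"
    unfolding ps
  proof
    assume "in_CSP ({..<n}, E) (top_ext G)"
    then obtain h where h: "dg_hom ({..<n}, E) (top_ext G) h" by (auto simp: in_CSP_def)
    have src: "(x,a) \<in> E \<Longrightarrow> \<exists>v. h x = Some v \<and> v \<in> fst G" for x a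
      using h top_snd_src[OF _ G] unfolding dg_hom_def by (metis snd_conv)
    have "dg_hom (query_output Qtr n E []) G (\<lambda>xs. the (h (hd xs)))"
      unfolding dg_hom_def
    proof (intro conjI allI impI ballI)
      fix xs assume "xs \<in> fst (query_output Qtr n E [])"
      then obtain x a where "xs = [x]" "(x,a) \<in> E" by (auto simp: Qtr_fst)
      then show "the (h (hd xs)) \<in> fst G" using src by fastforce
    next
      fix xs ys assume "(xs, ys) \<in> snd (query_output Qtr n E [])"
      then obtain x y a b where "xs = [x]" "ys = [y]" "(x,a) \<in> E" "(y,b) \<in> E" "(x,y) \<in> E"
        by (auto simp: Qtr_snd Qtr_fst)
      moreover obtain v w where "h x = Some v" "h y = Some w"
        using src \<open>(x,a) \<in> E\<close> \<open>(y,b) \<in> E\<close> by blast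
      moreover have "(h x, h y) \<in> snd (top_ext G)" using h \<open>(x,y) \<in> E\<close> by (simp add: dg_hom_def)
      ultimately show "(the (h (hd xs)), the (h (hd ys))) \<in> snd G" by simp
    qed
    then show "in_CSP (query_output Qtr n E []) G" by (auto simp: in_CSP_def)
  next
    assume "in_CSP (query_output Qtr n E []) G"
    then obtain g where g: "dg_hom (query_output Qtr n E []) G g" by (auto simp: in_CSP_def)
    define h where "h x = (if \<exists>a<n. (x,a) \<in> E then Some (g [x]) else None)" for x
    have "dg_hom ({..<n}, E) (top_ext G) h"
      unfolding dg_hom_def
    proof (intro conjI allI impI ballI)
      fix x assume "x \<in> fst ({..<n}::nat set, E)"
      hence xn: "x < n" by simp
      show "h x \<in> fst (top_ext G)"
      proof (cases "\<exists>a<n. (x,a) \<in> E")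
        case True
        hence "[x] \<in> fst (query_output Qtr n E [])" using xn by (simp add: Qtr_fst)
        hence "g [x] \<in> fst G" using g by (simp add: dg_hom_def)
        then show ?thesis using True by (simp add: h_def)
      next
        case False then show ?thesis unfolding h_def by auto
      qed
    next
      fix x y assume xy: "(x, y) \<in> snd ({..<n}::nat set, E)"
      hence xyE: "(x,y) \<in> E" and xn: "x < n" and yn: "y < n" using E by auto
      hence ux: "[x] \<in> fst (query_output Qtr n E [])" by (auto simp add: Qtr_fst)
      hence gx: "g [x] \<in> fst G" using g by (simp add: dg_hom_def)
      have hx: "h x = Some (g [x])" using xyE yn by (auto simp: h_def)
      show "(h x, h y) \<in> snd (top_ext G)"
      proof (cases "\<exists>a<n. (y,a) \<in> E")
        case True
        hence uy: "[y] \<in> fst (query_output Qtr n E [])" using yn by (simp add: Qtr_fst)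
        hence "([x],[y]) \<in> snd (query_output Qtr n E [])" using ux xyE by (simp add: Qtr_snd)
        hence "(g [x], g [y]) \<in> snd G" using g by (simp add: dg_hom_def)
        moreover have "h y = Some (g [y])" using True unfolding h_def by auto
        ultimately show ?thesis using hx by simp
      next
        case False
        hence "h y = None" unfolding h_def by auto
        then show ?thesis using hx gx by simp
      qed
    qed
    then show "in_CSP ({..<n}, E) (top_ext G)" by (auto simp: in_CSP_def)
  qed
qed

lemma red_bot_rev: assumes G: "is_digraph G" shows "fo_reduction Qbr (bot_ext G) G"
  unfolding fo_reduction_def
proof (intro allI impI)
  fix n E and ps :: "nat list"
  assume A: "ordered_input n E \<and> length ps = q_params Qbr \<and> distinct ps \<and> set ps \<subseteq> {..<n}"
  hence ps: "ps = []" and E: "E \<subseteq> {..<n} \<times> {..<n}" by (auto simp: Qbr_def ordered_input_def)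
  show "in_CSP ({..<n}, E) (bot_ext G) = in_CSP (query_output Qbr n E ps) G"
    unfolding ps
  proof
    assume "in_CSP ({..<n}, E) (bot_ext G)"
    then obtain h where h: "dg_hom ({..<n}, E) (bot_ext G) h" by (auto simp: in_CSP_def)
    have tgt: "(a,x) \<in> E \<Longrightarrow> \<exists>v. h x = Some v \<and> v \<in> fst G" for x a
      using h bot_snd_tgt[OF _ G] unfolding dg_hom_def by (metis snd_conv)
    have "dg_hom (query_output Qbr n E []) G (\<lambda>xs. the (h (hd xs)))"
      unfolding dg_hom_def
    proof (intro conjI allI impI ballI)
      fix xs assume "xs \<in> fst (query_output Qbr n E [])"
      then obtain x a where "xs = [x]" "(a,x) \<in> E" by (auto simp: Qbr_fst)
      then show "the (h (hd xs)) \<in> fst G" using tgt by fastforce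
    next
      fix xs ys assume "(xs, ys) \<in> snd (query_output Qbr n E [])"
      then obtain x y a b where "xs = [x]" "ys = [y]" "(a,x) \<in> E" "(b,y) \<in> E" "(x,y) \<in> E"
        by (auto simp: Qbr_snd Qbr_fst)
      moreover obtain v w where "h x = Some v" "h y = Some w"
        using tgt \<open>(a,x) \<in> E\<close> \<open>(b,y) \<in> E\<close> by blast
      moreover have "(h x, h y) \<in> snd (bot_ext G)" using h \<open>(x,y) \<in> E\<close> by (simp add: dg_hom_def)
      ultimately show "(the (h (hd xs)), the (h (hd ys))) \<in> snd G" by simp
    qed
    then show "in_CSP (query_output Qbr n E []) G" by (auto simp: in_CSP_def)
  next
    assume "in_CSP (query_output Qbr n E []) G"
    then obtain g where g: "dg_hom (query_output Qbr n E []) G g" by (auto simp: in_CSP_def)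
    define h where "h x = (if \<exists>a<n. (a,x) \<in> E then Some (g [x]) else None)" for x
    have "dg_hom ({..<n}, E) (bot_ext G) h"
      unfolding dg_hom_def
    proof (intro conjI allI impI ballI)
      fix x assume "x \<in> fst ({..<n}::nat set, E)"
      hence xn: "x < n" by simp
      show "h x \<in> fst (bot_ext G)"
      proof (cases "\<exists>a<n. (a,x) \<in> E")
        case True
        hence "[x] \<in> fst (query_output Qbr n E [])" using xn by (simp add: Qbr_fst)
        hence "g [x] \<in> fst G" using g by (simp add: dg_hom_def)
        then show ?thesis using True by (simp add: h_def)
      next
        case False then show ?thesis unfolding h_def by auto
      qed
    next
      fix x y assume xy: "(x, y) \<in> snd ({..<n}::nat set, E)"
      hence xyE: "(x,y) \<in> E" and xn: "x < n" and yn: "y < n" using E by auto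
      hence uy: "[y] \<in> fst (query_output Qbr n E [])" by (auto simp add: Qbr_fst)
      hence gy: "g [y] \<in> fst G" using g by (simp add: dg_hom_def)
      have hy: "h y = Some (g [y])" using xyE xn by (auto simp: h_def)
      show "(h x, h y) \<in> snd (bot_ext G)"
      proof (cases "\<exists>a<n. (a,x) \<in> E")
        case True
        hence ux: "[x] \<in> fst (query_output Qbr n E [])" using xn by (simp add: Qbr_fst)
        hence "([x],[y]) \<in> snd (query_output Qbr n E [])" using uy xyE by (simp add: Qbr_snd)
        hence "(g [x], g [y]) \<in> snd G" using g by (simp add: dg_hom_def)
        moreover have "h x = Some (g [x])" using True unfolding h_def by auto
        ultimately show ?thesis using hy by simp
      next
        case False
        hence "h x = None" unfolding h_def by auto
        then show ?thesis using hy gy by simp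
      qed
    qed
    then show "in_CSP ({..<n}, E) (bot_ext G)" by (auto simp: in_CSP_def)
  qed
qed

definition Qt :: fo_query where
  "Qt = \<lparr>q_dim = 2, q_params = 0, q_univ = FEq 0 0,
     q_edge = FOr (FAnd (FEq 0 1) (FAnd (FEq 2 3) (FEdge 0 2)))
                  (FAnd (FEq 0 1) (FAnd (FEq 0 2) (FNot (FEq 2 3))))\<rparr>"
definition Qb :: fo_query where
  "Qb = \<lparr>q_dim = 2, q_params = 0, q_univ = FEq 0 0,
     q_edge = FOr (FAnd (FEq 0 1) (FAnd (FEq 2 3) (FEdge 0 2)))
                  (FAnd (FEq 2 3) (FAnd (FEq 0 2) (FNot (FEq 0 1))))\<rparr>"

lemma Qt_fst: "xs \<in> fst (query_output Qt n E []) \<longleftrightarrow> (\<exists>a b. xs = [a,b] \<and> a < n \<and> b < n)"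
  by (auto simp: query_output_def Qt_def fo_env_def Let_def numeral_2_eq_2 length_Suc_conv)
lemma Qt_shape: "(xs, ys) \<in> snd (query_output Qt n E []) \<Longrightarrow> \<exists>a b c d. xs = [a,b] \<and> ys = [c,d]"
  by (auto simp: query_output_def Qt_def Let_def numeral_2_eq_2 length_Suc_conv)
lemma Qt_snd: "([a,b],[c,d]) \<in> snd (query_output Qt n E []) \<longleftrightarrow>
  a < n \<and> b < n \<and> c < n \<and> d < n \<and> ((a = b \<and> c = d \<and> (a,c) \<in> E) \<or> (a = b \<and> c = a \<and> d \<noteq> c))"
  by (auto simp: query_output_def Qt_def fo_env_def Let_def)
lemma Qb_fst: "xs \<in> fst (query_output Qb n E []) \<longleftrightarrow> (\<exists>a b. xs = [a,b] \<and> a < n \<and> b < n)"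
  by (auto simp: query_output_def Qb_def fo_env_def Let_def numeral_2_eq_2 length_Suc_conv)
lemma Qb_shape: "(xs, ys) \<in> snd (query_output Qb n E []) \<Longrightarrow> \<exists>a b c d. xs = [a,b] \<and> ys = [c,d]"
  by (auto simp: query_output_def Qb_def Let_def numeral_2_eq_2 length_Suc_conv)
lemma Qb_snd: "([a,b],[c,d]) \<in> snd (query_output Qb n E []) \<longleftrightarrow>
  a < n \<and> b < n \<and> c < n \<and> d < n \<and> ((a = b \<and> c = d \<and> (a,c) \<in> E) \<or> (c = d \<and> a = c \<and> a \<noteq> b))"
  by (auto simp: query_output_def Qb_def fo_env_def Let_def)

lemma red_top: assumes G: "is_digraph G" and v0: "v0 \<in> fst G" shows "fo_reduction Qt G (top_ext G)"
  unfolding fo_reduction_def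
proof (intro allI impI)
  fix n E and ps :: "nat list"
  assume A: "ordered_input n E \<and> length ps = q_params Qt \<and> distinct ps \<and> set ps \<subseteq> {..<n}"
  hence ps: "ps = []" and E: "E \<subseteq> {..<n} \<times> {..<n}" and loop: "\<And>v. (v,v) \<notin> E"
    by (auto simp: Qt_def ordered_input_def)
  show "in_CSP ({..<n}, E) G = in_CSP (query_output Qt n E ps) (top_ext G)"
    unfolding ps
  proof
    assume "in_CSP ({..<n}, E) G"
    then obtain h where h: "dg_hom ({..<n}, E) G h" by (auto simp: in_CSP_def)
    define g where "g xs = (if xs!0 = xs!1 then Some (h (xs!0)) else None)" for xs :: "nat list"
    have "dg_hom (query_output Qt n E []) (top_ext G) g"
      unfolding dg_hom_def
    proof (intro conjI allI impI ballI)
      fix xs assume "xs \<in> fst (query_output Qt n E [])"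
      then obtain a b where "xs = [a,b]" "a < n" by (auto simp: Qt_fst)
      then show "g xs \<in> fst (top_ext G)" using h by (auto simp: g_def dg_hom_def)
    next
      fix xs ys assume e: "(xs, ys) \<in> snd (query_output Qt n E [])"
      then obtain a b c d where xs: "xs = [a,b]" and ys: "ys = [c,d]" using Qt_shape by blast
      have "a < n \<and> b < n \<and> c < n \<and> d < n \<and> ((a = b \<and> c = d \<and> (a,c) \<in> E) \<or> (a = b \<and> c = a \<and> d \<noteq> c))"
        using e unfolding xs ys Qt_snd .
      then show "(g xs, g ys) \<in> snd (top_ext G)" using h unfolding xs ys
        by (auto simp: g_def dg_hom_def)
    qed
    then show "in_CSP (query_output Qt n E []) (top_ext G)" by (auto simp: in_CSP_def)
  next
    assume "in_CSP (query_output Qt n E []) (top_ext G)"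
    then obtain g where g: "dg_hom (query_output Qt n E []) (top_ext G) g" by (auto simp: in_CSP_def)
    have gv: "xs \<in> fst (query_output Qt n E []) \<Longrightarrow> g xs \<in> fst (top_ext G)" for xs
      using g by (simp add: dg_hom_def)
    have ge: "(xs, ys) \<in> snd (query_output Qt n E []) \<Longrightarrow> (g xs, g ys) \<in> snd (top_ext G)" for xs ys
      using g by (simp add: dg_hom_def)
    define h where "h x = (case g [x,x] of Some v \<Rightarrow> v | None \<Rightarrow> v0)" for x
    have "dg_hom ({..<n}, E) G h"
      unfolding dg_hom_def
    proof (intro conjI allI impI ballI)
      fix x assume "x \<in> fst ({..<n}::nat set, E)"
      hence "[x,x] \<in> fst (query_output Qt n E [])" by (simp add: Qt_fst)
      hence "g [x,x] \<in> fst (top_ext G)" by (rule gv)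
      then show "h x \<in> fst G" using v0 by (cases "g [x,x]") (auto simp: h_def)
    next
      fix x y assume xy: "(x, y) \<in> snd ({..<n}::nat set, E)"
      hence xyE: "(x,y) \<in> E" and xn: "x < n" and yn: "y < n" and xy': "x \<noteq> y" using E loop by auto
      have "([x,x],[y,y]) \<in> snd (query_output Qt n E [])" using xyE xn yn by (simp add: Qt_snd)
      hence e1: "(g [x,x], g [y,y]) \<in> snd (top_ext G)" by (rule ge)
      have "([y,y],[y,x]) \<in> snd (query_output Qt n E [])" using xy' xn yn by (simp add: Qt_snd)
      hence e2: "(g [y,y], g [y,x]) \<in> snd (top_ext G)" by (rule ge)
      obtain v where v: "g [x,x] = Some v" using top_snd_src[OF e1 G] by blast
      obtain w where w: "g [y,y] = Some w" using top_snd_src[OF e2 G] by blast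
      show "(h x, h y) \<in> snd G" using e1 v w by (simp add: h_def)
    qed
    then show "in_CSP ({..<n}, E) G" by (auto simp: in_CSP_def)
  qed
qed

lemma red_bot: assumes G: "is_digraph G" and v0: "v0 \<in> fst G" shows "fo_reduction Qb G (bot_ext G)"
  unfolding fo_reduction_def
proof (intro allI impI)
  fix n E and ps :: "nat list"
  assume A: "ordered_input n E \<and> length ps = q_params Qb \<and> distinct ps \<and> set ps \<subseteq> {..<n}"
  hence ps: "ps = []" and E: "E \<subseteq> {..<n} \<times> {..<n}" and loop: "\<And>v. (v,v) \<notin> E"
    by (auto simp: Qb_def ordered_input_def)
  show "in_CSP ({..<n}, E) G = in_CSP (query_output Qb n E ps) (bot_ext G)"
    unfolding ps
  proof
    assume "in_CSP ({..<n}, E) G"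
    then obtain h where h: "dg_hom ({..<n}, E) G h" by (auto simp: in_CSP_def)
    define g where "g xs = (if xs!0 = xs!1 then Some (h (xs!0)) else None)" for xs :: "nat list"
    have "dg_hom (query_output Qb n E []) (bot_ext G) g"
      unfolding dg_hom_def
    proof (intro conjI allI impI ballI)
      fix xs assume "xs \<in> fst (query_output Qb n E [])"
      then obtain a b where "xs = [a,b]" "a < n" by (auto simp: Qb_fst)
      then show "g xs \<in> fst (bot_ext G)" using h by (auto simp: g_def dg_hom_def)
    next
      fix xs ys assume e: "(xs, ys) \<in> snd (query_output Qb n E [])"
      then obtain a b c d where xs: "xs = [a,b]" and ys: "ys = [c,d]" using Qb_shape by blast
      have "a < n \<and> b < n \<and> c < n \<and> d < n \<and> ((a = b \<and> c = d \<and> (a,c) \<in> E) \<or> (c = d \<and> a = c \<and> a \<noteq> b))"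
        using e unfolding xs ys Qb_snd .
      then show "(g xs, g ys) \<in> snd (bot_ext G)" using h unfolding xs ys
        by (auto simp: g_def dg_hom_def)
    qed
    then show "in_CSP (query_output Qb n E []) (bot_ext G)" by (auto simp: in_CSP_def)
  next
    assume "in_CSP (query_output Qb n E []) (bot_ext G)"
    then obtain g where g: "dg_hom (query_output Qb n E []) (bot_ext G) g" by (auto simp: in_CSP_def)
    have gv: "xs \<in> fst (query_output Qb n E []) \<Longrightarrow> g xs \<in> fst (bot_ext G)" for xs
      using g by (simp add: dg_hom_def)
    have ge: "(xs, ys) \<in> snd (query_output Qb n E []) \<Longrightarrow> (g xs, g ys) \<in> snd (bot_ext G)" for xs ys
      using g by (simp add: dg_hom_def)
    define h where "h x = (case g [x,x] of Some v \<Rightarrow> v | None \<Rightarrow> v0)" for x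
    have "dg_hom ({..<n}, E) G h"
      unfolding dg_hom_def
    proof (intro conjI allI impI ballI)
      fix x assume "x \<in> fst ({..<n}::nat set, E)"
      hence "[x,x] \<in> fst (query_output Qb n E [])" by (simp add: Qb_fst)
      hence "g [x,x] \<in> fst (bot_ext G)" by (rule gv)
      then show "h x \<in> fst G" using v0 by (cases "g [x,x]") (auto simp: h_def)
    next
      fix x y assume xy: "(x, y) \<in> snd ({..<n}::nat set, E)"
      hence xyE: "(x,y) \<in> E" and xn: "x < n" and yn: "y < n" and xy': "x \<noteq> y" using E loop by auto
      have "([x,x],[y,y]) \<in> snd (query_output Qb n E [])" using xyE xn yn by (simp add: Qb_snd)
      hence e1: "(g [x,x], g [y,y]) \<in> snd (bot_ext G)" by (rule ge)
      have "([x,y],[x,x]) \<in> snd (query_output Qb n E [])" using xy' xn yn by (simp add: Qb_snd)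
      hence e2: "(g [x,y], g [x,x]) \<in> snd (bot_ext G)" by (rule ge)
      obtain v where v: "g [x,x] = Some v" using bot_snd_tgt[OF e2 G] by blast
      obtain w where w: "g [y,y] = Some w" using bot_snd_tgt[OF e1 G] by blast
      show "(h x, h y) \<in> snd G" using e1 v w by (simp add: h_def)
    qed
    then show "in_CSP ({..<n}, E) G" by (auto simp: in_CSP_def)
  qed
qed

definition Qe :: fo_query where
  "Qe = \<lparr>q_dim = 1, q_params = 0, q_univ = FEq 0 0, q_edge = FEq 0 0\<rparr>"

lemma Qe_loop: "0 < n \<Longrightarrow> ([0],[0]) \<in> snd (query_output Qe n E [])"
  by (auto simp: query_output_def Qe_def fo_env_def Let_def)

lemma red_empty:
  assumes G: "is_digraph G" and e: "fst G = {}"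
  shows "fo_reduction Qe G (top_ext G) \<and> fo_reduction Qe G (bot_ext G)"
  unfolding fo_reduction_def
proof (intro conjI allI impI)
  fix n E and ps :: "nat list"
  assume A: "ordered_input n E \<and> length ps = q_params Qe \<and> distinct ps \<and> set ps \<subseteq> {..<n}"
  hence ps: "ps = []" and n: "0 < n" by (auto simp: Qe_def ordered_input_def)
  have l: "\<not> in_CSP ({..<n}, E) G" using n e by (auto simp: in_CSP_def dg_hom_def)
  have "\<not> in_CSP (query_output Qe n E []) (top_ext G)"
  proof
    assume "in_CSP (query_output Qe n E []) (top_ext G)"
    then obtain g where "dg_hom (query_output Qe n E []) (top_ext G) g" by (auto simp: in_CSP_def)
    hence "(g [0], g [0]) \<in> snd (top_ext G)" using Qe_loop[OF n] by (auto simp: dg_hom_def)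
    then show False using top_snd_src[OF _ G] e by blast
  qed
  then show "in_CSP ({..<n}, E) G = in_CSP (query_output Qe n E ps) (top_ext G)" using l ps by simp
next
  fix n E and ps :: "nat list"
  assume A: "ordered_input n E \<and> length ps = q_params Qe \<and> distinct ps \<and> set ps \<subseteq> {..<n}"
  hence ps: "ps = []" and n: "0 < n" by (auto simp: Qe_def ordered_input_def)
  have l: "\<not> in_CSP ({..<n}, E) G" using n e by (auto simp: in_CSP_def dg_hom_def)
  have "\<not> in_CSP (query_output Qe n E []) (bot_ext G)"
  proof
    assume "in_CSP (query_output Qe n E []) (bot_ext G)"
    then obtain g where "dg_hom (query_output Qe n E []) (bot_ext G) g" by (auto simp: in_CSP_def)
    hence "(g [0], g [0]) \<in> snd (bot_ext G)" using Qe_loop[OF n] by (auto simp: dg_hom_def)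
    then show False using bot_snd_tgt[OF _ G] e by blast
  qed
  then show "in_CSP ({..<n}, E) G = in_CSP (query_output Qe n E ps) (bot_ext G)" using l ps by simp
qed

theorem proposition3p2:
  fixes G :: "'a digraph"
  assumes "is_digraph G"
  shows "fo_equivalent (bot_ext G) G \<and> fo_equivalent (top_ext G) G"
proof -
  have r1: "fo_reducible (bot_ext G) G" "fo_reducible (top_ext G) G"
    using red_bot_rev[OF assms] red_top_rev[OF assms] by (auto simp: fo_reducible_def)
  have r2: "fo_reducible G (bot_ext G) \<and> fo_reducible G (top_ext G)"
  proof (cases "fst G = {}")
    case True
    then show ?thesis using red_empty[OF assms True] by (auto simp: fo_reducible_def)
  next
    case False
    then obtain v0 where "v0 \<in> fst G" by blast
    then show ?thesis using red_bot[OF assms] red_top[OF assms] by (auto simp: fo_reducible_def)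
  qed
  show ?thesis using r1 r2 by (simp add: fo_equivalent_def)
qed

end
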